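(* Let $m, n$ be positive integers, let $f: V(H_{n,m}) \rightarrow \{-1,1\}$ be a function, and let $q = \frac{f(V(H_{n,m}))}{n}$ and $k = \lceil q \rceil$. Then $H_{n,m}$ can be decomposed into $n$ vertex-disjoint directed $m$-paths $P_1, \ldots, P_n$ with \[ f(V(P_j)) \in \begin{cases} \{k - 2, k\}, & \text{if } m \equiv k \pmod 2,\\ \{k-1, k+1\}, & \text{if } m \not\equiv k \pmod 2, \end{cases} \] for all $1 \le j \le n$.
   Context: For a set $Y$ of vertices, $f(Y)=\sum_{y\in Y}f(y)$. $H_{n,m}$ is the directed graph whose vertex set is the disjoint union of $V_1,\dots,V_m$ with $|V_i|=n$, and whose arc set is $\bigcup_{i=1}^{m-1}\{(v,w): v\in V_i, w\in V_{i+1}\}$. A directed $m$-path is a directed path with $m$ vertices. *)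

theory Defs
  imports Complex_Main
begin

definition H_verts :: "nat \<Rightarrow> nat \<Rightarrow> (nat \<times> nat) set" where
  "H_verts n m = {1..m} \<times> {1..n}"

definition H_arcs :: "nat \<Rightarrow> nat \<Rightarrow> ((nat \<times> nat) \<times> (nat \<times> nat)) set" where
  "H_arcs n m = {((i, v), (i', w)). i \<in> {1..<m} \<and> i' = i + 1 \<and> v \<in> {1..n} \<and> w \<in> {1..n}}"

definition is_dipath :: "'a set \<Rightarrow> ('a \<times> 'a) set \<Rightarrow> 'a list \<Rightarrow> bool" where
  "is_dipath V A P \<longleftrightarrow> P \<noteq> [] \<and> distinct P \<and> set P \<subseteq> V \<and>
     (\<forall>i. Suc i < length P \<longrightarrow> (P ! i, P ! Suc i) \<in> A)"

definition fsum :: "('a \<Rightarrow> int) \<Rightarrow> 'a set \<Rightarrow> int" where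
  "fsum f Y = (\<Sum>y\<in>Y. f y)"

end

theory Submission
  imports Defs
begin

lemma bij_combine_if:
  assumes "bij_betw h1 A B" "bij_betw h2 C D" "A \<inter> C = {}" "B \<inter> D = {}"
  shows "bij_betw (\<lambda>x. if x \<in> A then h1 x else h2 x) (A \<union> C) (B \<union> D)"
proof (rule bij_betw_combine)
  show "bij_betw (\<lambda>x. if x \<in> A then h1 x else h2 x) A B"
    using assms(1) by (subst bij_betw_cong[where g=h1]) auto
  show "bij_betw (\<lambda>x. if x \<in> A then h1 x else h2 x) C D"
  proof -
    have "\<forall>x\<in>C. (if x \<in> A then h1 x else h2 x) = h2 x" using assms(3) by auto
    then have "bij_betw (\<lambda>x. if x \<in> A then h1 x else h2 x) C D = bij_betw h2 C D"
      by (intro bij_betw_cong) auto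
    then show ?thesis using assms(2) by simp
  qed
qed (use assms in auto)

lemma bij_pref:
  assumes "finite X" "finite Y" "card X = card Y" "A \<subseteq> X" "Q \<subseteq> Y"
  shows "\<exists>h. bij_betw h X Y \<and> ((\<forall>x\<in>X. h x \<in> Q \<longrightarrow> x \<in> A) \<or> (\<forall>x\<in>A. h x \<in> Q))"
proof (cases "card Q \<le> card A")
  case True
  then obtain A' where A': "A' \<subseteq> A" "card A' = card Q" "finite A'"
    by (metis obtain_subset_with_card_n)
  obtain h1 where h1: "bij_betw h1 A' Q"
    using finite_same_card_bij[of A' Q] A' assms finite_subset by metis
  have "card (X - A') = card (Y - Q)"
    using A' assms by (simp add: card_Diff_subset finite_subset)
  then obtain h2 where h2: "bij_betw h2 (X - A') (Y - Q)"
    using finite_same_card_bij[of "X - A'" "Y - Q"] assms by auto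
  have b: "bij_betw (\<lambda>x. if x \<in> A' then h1 x else h2 x) (A' \<union> (X - A')) (Q \<union> (Y - Q))"
    by (rule bij_combine_if[OF h1 h2]) auto
  have e1: "A' \<union> (X - A') = X" "Q \<union> (Y - Q) = Y" using A' assms by auto
  show ?thesis
  proof (intro exI conjI disjI1 ballI impI)
    show "bij_betw (\<lambda>x. if x \<in> A' then h1 x else h2 x) X Y" using b e1 by simp
    fix x assume "x \<in> X" "(if x \<in> A' then h1 x else h2 x) \<in> Q"
    then show "x \<in> A" using A' h2 by (auto simp: bij_betw_def split: if_splits)
  qed
next
  case False
  then obtain Q' where Q': "Q' \<subseteq> Q" "card Q' = card A" "finite Q'"
    by (metis obtain_subset_with_card_n nat_le_linear)
  obtain h1 where h1: "bij_betw h1 A Q'"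
    using finite_same_card_bij[of A Q'] Q' assms finite_subset by metis
  have "card (X - A) = card (Y - Q')"
    using Q' assms by (simp add: card_Diff_subset finite_subset)
  then obtain h2 where h2: "bij_betw h2 (X - A) (Y - Q')"
    using finite_same_card_bij[of "X - A" "Y - Q'"] assms by auto
  have b: "bij_betw (\<lambda>x. if x \<in> A then h1 x else h2 x) (A \<union> (X - A)) (Q' \<union> (Y - Q'))"
    by (rule bij_combine_if[OF h1 h2]) auto
  have e1: "A \<union> (X - A) = X" "Q' \<union> (Y - Q') = Y" using Q' assms by auto
  show ?thesis
  proof (intro exI conjI disjI2 ballI impI)
    show "bij_betw (\<lambda>x. if x \<in> A then h1 x else h2 x) X Y" using b e1 by simp
    fix x assume "x \<in> A"
    then show "(if x \<in> A then h1 x else h2 x) \<in> Q" using Q' h1 by (auto simp: bij_betw_def)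
  qed
qed

lemma layers:
  fixes f :: "nat \<times> nat \<Rightarrow> int"
  assumes fv: "\<forall>x\<in>H_verts n M. f x \<in> {-1,1}"
  shows "m \<le> M \<Longrightarrow> \<exists>g b. (\<forall>i\<in>{1..m}. bij_betw (g i) {1..n} {1..n}) \<and>
     (\<forall>j\<in>{1..n}. (\<Sum>i=1..m. f (i, g i j)) \<in> {b, b+2}) \<and> b mod 2 = int m mod 2"
proof (induction m)
  case 0
  show ?case by (rule exI[of _ "\<lambda>i j. j"], rule exI[of _ 0]) auto
next
  case (Suc m)
  then obtain g b where gb: "\<forall>i\<in>{1..m}. bij_betw (g i) {1..n} {1..n}"
    "\<forall>j\<in>{1..n}. (\<Sum>i=1..m. f (i, g i j)) \<in> {b, b+2}" "b mod 2 = int m mod 2"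
    by auto
  define s where "s j = (\<Sum>i=1..m. f (i, g i j))" for j
  define A where "A = {j\<in>{1..n}. s j = b}"
  define Q where "Q = {v\<in>{1..n::nat}. f (Suc m, v) = 1}"
  obtain h where h: "bij_betw h {1..n} {1..n}"
    and hp: "(\<forall>x\<in>{1..n}. h x \<in> Q \<longrightarrow> x \<in> A) \<or> (\<forall>x\<in>A. h x \<in> Q)"
  proof -
    have "A \<subseteq> {1..n}" "Q \<subseteq> {1..n}" unfolding A_def Q_def by auto
    then show ?thesis using bij_pref[of "{1..n}" "{1..n}" A Q] that by auto
  qed
  define g' where "g' = g(Suc m := h)"
  have fl: "f (Suc m, h j) \<in> {-1,1}" if "j \<in> {1..n}" for j
  proof -
    have "h j \<in> {1..n}" using h that by (auto simp: bij_betw_def)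
    then show ?thesis using fv Suc.prems by (auto simp: H_verts_def)
  qed
  have sum': "(\<Sum>i=1..Suc m. f (i, g' i j)) = s j + f (Suc m, h j)" for j
  proof -
    have "(\<Sum>i=1..m. f (i, g' i j)) = s j" unfolding s_def g'_def
      by (intro sum.cong) auto
    then show ?thesis by (simp add: g'_def)
  qed
  have bij': "\<forall>i\<in>{1..Suc m}. bij_betw (g' i) {1..n} {1..n}"
    using gb(1) h by (auto simp: g'_def le_Suc_eq)
  have sj: "s j \<in> {b, b+2}" if "j \<in> {1..n}" for j using gb(2) that s_def by auto
  from hp show ?case
  proof
    assume H: "\<forall>x\<in>{1..n}. h x \<in> Q \<longrightarrow> x \<in> A"
    have "\<forall>j\<in>{1..n}. (\<Sum>i=1..Suc m. f (i, g' i j)) \<in> {b - 1, b - 1 + 2}"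
    proof
      fix j assume j: "j \<in> {1..n}"
      have hj: "h j \<in> {1..n}" using h j by (auto simp: bij_betw_def)
      show "(\<Sum>i=1..Suc m. f (i, g' i j)) \<in> {b - 1, b - 1 + 2}"
      proof (cases "f (Suc m, h j) = 1")
        case True
        then have "j \<in> A" using H j hj by (auto simp: Q_def)
        then show ?thesis using True unfolding sum' by (simp add: A_def)
      next
        case False
        then have "f (Suc m, h j) = -1" using fl[OF j] by auto
        then show ?thesis using sj[OF j] unfolding sum' by auto
      qed
    qed
    moreover have "(b - 1) mod 2 = int (Suc m) mod 2" using gb(3) by presburger
    ultimately show ?thesis using bij' by blast
  next
    assume H: "\<forall>x\<in>A. h x \<in> Q"
    have "\<forall>j\<in>{1..n}. (\<Sum>i=1..Suc m. f (i, g' i j)) \<in> {b + 1, b + 1 + 2}"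
    proof
      fix j assume j: "j \<in> {1..n}"
      show "(\<Sum>i=1..Suc m. f (i, g' i j)) \<in> {b + 1, b + 1 + 2}"
      proof (cases "j \<in> A")
        case True
        then have "f (Suc m, h j) = 1" using H by (auto simp: Q_def)
        then show ?thesis using True unfolding sum' by (simp add: A_def)
      next
        case False
        then have "s j = b + 2" using sj[OF j] j by (auto simp: A_def)
        then show ?thesis using fl[OF j] unfolding sum' by auto
      qed
    qed
    moreover have "(b + 1) mod 2 = int (Suc m) mod 2" using gb(3) by presburger
    ultimately show ?thesis using bij' by blast
  qed
qed

theorem corollary4p5:
  fixes n m :: nat and f :: "nat \<times> nat \<Rightarrow> int"
  assumes "n \<ge> 1" and "m \<ge> 1"
    and "\<forall>x\<in>H_verts n m. f x \<in> {-1, 1}"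
  defines "q \<equiv> real_of_int (fsum f (H_verts n m)) / real n"
  defines "k \<equiv> ceiling q"
  shows "\<exists>P :: nat \<Rightarrow> (nat \<times> nat) list.
     (\<forall>j\<in>{1..n}. is_dipath (H_verts n m) (H_arcs n m) (P j) \<and> length (P j) = m) \<and>
     (\<forall>j\<in>{1..n}. \<forall>j'\<in>{1..n}. j \<noteq> j' \<longrightarrow> set (P j) \<inter> set (P j') = {}) \<and>
     (\<Union>j\<in>{1..n}. set (P j)) = H_verts n m \<and>
     (\<forall>j\<in>{1..n}. fsum f (set (P j)) \<in>
        (if int m mod 2 = k mod 2 then {k - 2, k} else {k - 1, k + 1}))"
proof -
  obtain g b where gb: "\<forall>i\<in>{1..m}. bij_betw (g i) {1..n} {1..n}"
    "\<forall>j\<in>{1..n}. (\<Sum>i=1..m. f (i, g i j)) \<in> {b, b+2}" "b mod 2 = int m mod 2"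
    using layers[OF assms(3), of m] by auto
  define s where "s j = (\<Sum>i=1..m. f (i, g i j))" for j
  define P where "P j = map (\<lambda>i. (i, g i j)) [1..<m+1]" for j
  have gin: "g i j \<in> {1..n}" if "i \<in> {1..m}" "j \<in> {1..n}" for i j
  proof -
    have "bij_betw (g i) {1..n} {1..n}" using gb(1) that by auto
    then show ?thesis using that(2) by (metis bij_betwE)
  qed
  have setP: "set (P j) = (\<lambda>i. (i, g i j)) ` {1..m}" for j
    unfolding P_def by auto
  have fsP: "fsum f (set (P j)) = s j" for j
  proof -
    have "inj_on (\<lambda>i. (i, g i j)) {1..m}" by (auto simp: inj_on_def)
    then show ?thesis unfolding setP fsum_def s_def by (simp add: sum.reindex)
  qed
  have total: "fsum f (H_verts n m) = (\<Sum>j\<in>{1..n}. s j)"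
  proof -
    have "fsum f (H_verts n m) = (\<Sum>i\<in>{1..m}. \<Sum>v\<in>{1..n}. f (i, v))"
      unfolding fsum_def H_verts_def by (simp add: sum.cartesian_product)
    also have "\<dots> = (\<Sum>i\<in>{1..m}. \<Sum>j\<in>{1..n}. f (i, g i j))"
    proof (rule sum.cong[OF refl])
      fix i assume "i \<in> {1..m}"
      then have "bij_betw (g i) {1..n} {1..n}" using gb(1) by auto
      then show "(\<Sum>v\<in>{1..n}. f (i, v)) = (\<Sum>j\<in>{1..n}. f (i, g i j))"
        using sum.reindex_bij_betw[of "g i" "{1..n}" "{1..n}" "\<lambda>v. f (i, v)"] by simp
    qed
    also have "\<dots> = (\<Sum>j\<in>{1..n}. s j)" unfolding s_def by (rule sum.swap)
    finally show ?thesis .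
  qed
  define T where "T = (\<Sum>j\<in>{1..n}. s j)"
  have sj: "s j \<in> {b, b+2}" if "j \<in> {1..n}" for j using gb(2) that s_def by auto
  have T1: "int n * b \<le> T"
  proof -
    have "(\<Sum>j\<in>{1..n}. b) \<le> T" unfolding T_def by (rule sum_mono) (use sj in force)
    then show ?thesis by simp
  qed
  have T2: "T \<le> int n * (b + 2)"
  proof -
    have "T \<le> (\<Sum>j\<in>{1..n}. b + 2)" unfolding T_def by (rule sum_mono) (use sj in force)
    then show ?thesis by simp
  qed
  have npos: "real n > 0" using assms(1) by simp
  have qT: "q = real_of_int T / real n" unfolding q_def total T_def ..
  have qlo: "real_of_int b \<le> q"
  proof -
    have "real_of_int (int n * b) \<le> real_of_int T" using T1 by linarith
    then have "real n * real_of_int b \<le> real_of_int T" by simp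
    then show ?thesis unfolding qT using npos by (simp add: pos_le_divide_eq mult.commute)
  qed
  have qhi: "q \<le> real_of_int b + 2"
  proof -
    have "real_of_int T \<le> real_of_int (int n * (b + 2))" using T2 by linarith
    then have "real_of_int T \<le> real n * (real_of_int b + 2)" by simp
    then show ?thesis unfolding qT using npos by (simp add: pos_divide_le_eq mult.commute)
  qed
  have klo: "b \<le> k" unfolding k_def using qlo by (simp add: le_ceiling_iff)
  have khi: "k \<le> b + 2" unfolding k_def using qhi by (simp add: ceiling_le_iff)
  have target: "s j \<in> (if int m mod 2 = k mod 2 then {k - 2, k} else {k - 1, k + 1})"
    if j: "j \<in> {1..n}" for j
  proof -
    consider "k = b" | "k = b + 1" | "k = b + 2" using klo khi by linarith
    then show ?thesis
    proof cases
      case 1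
      have "q \<le> real_of_int b" unfolding 1[symmetric] k_def by (rule le_of_int_ceiling)
      then have "real_of_int T \<le> real n * real_of_int b"
        unfolding qT using npos by (simp add: pos_divide_le_eq mult.commute)
      then have "T \<le> int n * b" by (metis of_int_le_iff of_int_mult of_int_of_nat_eq)
      then have "(\<Sum>j\<in>{1..n}. s j - b) = 0" using T1 unfolding T_def
        by (simp add: sum_subtractf)
      moreover have "\<forall>j\<in>{1..n}. 0 \<le> s j - b" using sj by force
      ultimately have "s j - b = 0" using j sum_nonneg_eq_0_iff[of "{1..n}" "\<lambda>j. s j - b"] by auto
      then show ?thesis using 1 gb(3) by auto
    next
      case 2
      have "int m mod 2 \<noteq> k mod 2" using 2 gb(3) by presburger
      then show ?thesis using 2 sj[OF j] by auto
    next
      case 3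
      have "int m mod 2 = k mod 2" using 3 gb(3) by presburger
      then show ?thesis using 3 sj[OF j] by auto
    qed
  qed
  show ?thesis
  proof (rule exI[of _ P], intro conjI ballI impI)
    fix j assume j: "j \<in> {1..n}"
    show "fsum f (set (P j)) \<in> (if int m mod 2 = k mod 2 then {k - 2, k} else {k - 1, k + 1})"
      using target[OF j] fsP by simp
    show "length (P j) = m" unfolding P_def by simp
    show "is_dipath (H_verts n m) (H_arcs n m) (P j)"
      unfolding is_dipath_def
    proof (intro conjI allI impI)
      show "P j \<noteq> []" unfolding P_def using assms(2) by simp
      show "distinct (P j)" unfolding P_def by (simp add: distinct_map inj_on_def)
      show "set (P j) \<subseteq> H_verts n m" unfolding setP H_verts_def using gin j by auto
      fix i assume i: "Suc i < length (P j)"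
      then have im: "Suc i < m" unfolding P_def by (simp del: upt_Suc)
      have "P j ! i = (i + 1, g (i + 1) j)" "P j ! Suc i = (i + 2, g (i + 2) j)"
        unfolding P_def using im by (simp_all del: upt_Suc)
      moreover have "g (i+1) j \<in> {1..n}" "g (i+2) j \<in> {1..n}" using gin j im by auto
      ultimately show "(P j ! i, P j ! Suc i) \<in> H_arcs n m"
        unfolding H_arcs_def using im by auto
    qed
  next
    fix j j' assume j: "j \<in> {1..n}" and j': "j' \<in> {1..n}" and ne: "j \<noteq> j'"
    show "set (P j) \<inter> set (P j') = {}"
    proof (rule ccontr)
      assume "set (P j) \<inter> set (P j') \<noteq> {}"
      then obtain i where i: "i \<in> {1..m}" "g i j = g i j'"
      proof -
        obtain x where "x \<in> set (P j)" "x \<in> set (P j')" using \<open>set (P j) \<inter> set (P j') \<noteq> {}\<close> by blast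
        then have "x \<in> (\<lambda>i. (i, g i j)) ` {1..m}" "x \<in> (\<lambda>i. (i, g i j')) ` {1..m}"
          by (simp_all only: setP)
        then obtain i i' where "x = (i, g i j)" "i \<in> {1..m}" "x = (i', g i' j')"
          by (elim imageE) 
        then have "i \<in> {1..m}" "g i j = g i j'" by auto
        then show ?thesis by (rule that)
      qed
      have "bij_betw (g i) {1..n} {1..n}" using gb(1) i(1) by blast
      then have "inj_on (g i) {1..n}" by (rule bij_betw_imp_inj_on)
      then have "j = j'" by (rule inj_onD[OF _ i(2) j j'])
      then show False using ne by simp
    qed
  next
    show "(\<Union>j\<in>{1..n}. set (P j)) = H_verts n m"
    proof
      show "(\<Union>j\<in>{1..n}. set (P j)) \<subseteq> H_verts n m"
        unfolding setP H_verts_def using gin by auto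
      show "H_verts n m \<subseteq> (\<Union>j\<in>{1..n}. set (P j))"
      proof
        fix x assume "x \<in> H_verts n m"
        then obtain i v where x: "x = (i, v)" "i \<in> {1..m}" "v \<in> {1..n}"
          unfolding H_verts_def by auto
        have "bij_betw (g i) {1..n} {1..n}" using gb(1) x(2) by blast
        then have "g i ` {1..n} = {1..n}" by (rule bij_betw_imp_surj_on)
        then have "v \<in> g i ` {1..n}" using x(3) by simp
        then obtain j where j: "j \<in> {1..n}" "g i j = v" by auto
        have "x \<in> (\<lambda>i. (i, g i j)) ` {1..m}" using x j by (auto intro: image_eqI[where x=i])
        then show "x \<in> (\<Union>j\<in>{1..n}. set (P j))" unfolding setP using j(1) by blast
      qed
    qed
  qed
qed

end
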